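(* Let $m\ge 1$ and let $s$ be a spline of degree $m$ with knots $\alpha_0<\alpha_1<\dots<\alpha_n$. Then there exists a compactly supported spline $\bar s$ of degree $m$ such that $\bar s$ coincides with $s$ on $[\alpha_0,\alpha_n]$ and the set of knots of $\bar s$ is contained in $$\{\alpha_0-m,\alpha_0-m+1,\dots,\alpha_0-1\}\cup\{\alpha_0,\alpha_1,\dots,\alpha_n\}\cup\{\alpha_n+1,\dots,\alpha_n+m\}.$$
   Context: A spline of degree $m$ (with finitely many knots) is a function $s\in C^{m-1}(\mathbb{R},\mathbb{R})$ for which there are finitely many points such that on each interval between consecutive such points, and on the two unbounded complementary intervals, $s$ coincides with a polynomial of degree at most $m$. The knots of $s$ are the points at which $s$ is not $C^\infty$. *)

theory Defs
  imports "HOL-Analysis.Analysis" "HOL-Computational_Algebra.Polynomial"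
begin

definition Ck_on :: "nat \<Rightarrow> (real \<Rightarrow> real) \<Rightarrow> real set \<Rightarrow> bool" where
  "Ck_on k f S \<longleftrightarrow>
     (\<forall>j<k. \<forall>x\<in>S. ((deriv ^^ j) f) differentiable (at x)) \<and>
     continuous_on S ((deriv ^^ k) f)"

definition smooth_at :: "(real \<Rightarrow> real) \<Rightarrow> real \<Rightarrow> bool" where
  "smooth_at f x \<longleftrightarrow> (\<exists>e>0. \<forall>k. Ck_on k f (ball x e))"

definition knots :: "(real \<Rightarrow> real) \<Rightarrow> real set" where
  "knots f = {x. \<not> smooth_at f x}"

text \<open>Spline of degree m (finitely many knots): f is C^(m-1) on the reals and there is a
finite set P of points such that on every interval disjoint from P (the intervals between
consecutive points and the two unbounded ones) f coincides with a polynomial of degree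
at most m.\<close>
definition spline :: "nat \<Rightarrow> (real \<Rightarrow> real) \<Rightarrow> bool" where
  "spline m f \<longleftrightarrow> Ck_on (m - 1) f UNIV \<and>
     (\<exists>P. finite P \<and> (\<forall>U. is_interval U \<and> U \<inter> P = {} \<longrightarrow>
        (\<exists>p :: real poly. degree p \<le> m \<and> (\<forall>x\<in>U. f x = poly p x))))"

definition compactly_supported :: "(real \<Rightarrow> real) \<Rightarrow> bool" where
  "compactly_supported f \<longleftrightarrow> compact (closure {x. f x \<noteq> 0})"

end

theory Submission imports Defs begin

lemma rdiff_fdiff: "(f::real\<Rightarrow>real) differentiable (at x) \<Longrightarrow> f field_differentiable (at x)"
  by (metis DERIV_deriv_iff_field_differentiable DERIV_deriv_iff_real_differentiable)

lemma rdiff_cong_ev: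
  fixes f g :: "real \<Rightarrow> real"
  assumes "eventually (\<lambda>y. f y = g y) (nhds x)" "f differentiable (at x)"
  shows "g differentiable (at x)"
proof -
  have "DERIV f x :> deriv f x" using assms(2) DERIV_deriv_iff_real_differentiable by blast
  hence "DERIV g x :> deriv f x" using DERIV_cong_ev[OF refl assms(1) refl] by blast
  thus ?thesis using real_differentiable_def by blast
qed

lemma hderiv_eq_open:
  fixes f g :: "real \<Rightarrow> real"
  assumes "open S" "\<forall>y\<in>S. f y = g y" "x \<in> S"
  shows "eventually (\<lambda>y. (deriv ^^ j) f y = (deriv ^^ j) g y) (nhds x)"
proof -
  have "\<forall>y\<in>S. (deriv ^^ j) f y = (deriv ^^ j) g y"
  proof
    fix y assume "y \<in> S"
    have "eventually (\<lambda>z. f z = g z) (nhds y)"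
      using assms(1,2) \<open>y\<in>S\<close> eventually_nhds by blast
    thus "(deriv ^^ j) f y = (deriv ^^ j) g y" by (rule higher_deriv_cong_ev) simp
  qed
  thus ?thesis using assms(1,3) eventually_nhds by blast
qed

lemma Ck_on_cong_open:
  assumes "open S" "\<forall>y\<in>S. f y = g y" "Ck_on k f S"
  shows "Ck_on k g S"
  unfolding Ck_on_def
proof (intro conjI allI impI ballI)
  fix j x assume "j < k" "x \<in> S"
  thus "(deriv ^^ j) g differentiable at x"
    using assms hderiv_eq_open[OF assms(1,2) \<open>x\<in>S\<close>, of j] rdiff_cong_ev
    unfolding Ck_on_def by blast
next
  have "\<forall>x\<in>S. isCont ((deriv ^^ k) f) x"
    using assms(3) continuous_on_eq_continuous_at[OF assms(1)] unfolding Ck_on_def by blast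
  hence "\<forall>x\<in>S. isCont ((deriv ^^ k) g) x"
    using isCont_cong hderiv_eq_open[OF assms(1,2)] by blast
  thus "continuous_on S ((deriv ^^ k) g)"
    using continuous_on_eq_continuous_at[OF assms(1)] by blast
qed

lemma Ck_on_subset: "Ck_on k f S \<Longrightarrow> T \<subseteq> S \<Longrightarrow> Ck_on k f T"
  unfolding Ck_on_def by (meson continuous_on_subset subsetD)

lemma Ck_local:
  assumes "\<And>x. \<exists>S g. open S \<and> x \<in> S \<and> Ck_on k g UNIV \<and> (\<forall>y\<in>S. f y = g y)"
  shows "Ck_on k f UNIV"
  unfolding Ck_on_def
proof (intro conjI allI impI ballI)
  fix j x assume "j < k"
  obtain S g where S: "open S" "x \<in> S" "Ck_on k g UNIV" "\<forall>y\<in>S. f y = g y"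
    using assms by blast
  have "\<forall>y\<in>S. g y = f y" using S by simp
  thus "(deriv ^^ j) f differentiable at x"
    using S \<open>j<k\<close> hderiv_eq_open[OF S(1) _ S(2), of g f j] rdiff_cong_ev
    unfolding Ck_on_def by blast
next
  have "isCont ((deriv ^^ k) f) x" for x
  proof -
    obtain S g where S: "open S" "x \<in> S" "Ck_on k g UNIV" "\<forall>y\<in>S. f y = g y"
      using assms by blast
    have "isCont ((deriv ^^ k) g) x" using S(3) unfolding Ck_on_def
      by (simp add: continuous_on_eq_continuous_at)
    thus ?thesis using isCont_cong hderiv_eq_open[OF S(1,4,2), of k] by blast
  qed
  thus "continuous_on UNIV ((deriv ^^ k) f)" by (simp add: continuous_on_eq_continuous_at)
qed

lemma smooth_cong:
  assumes "open S" "x \<in> S" "\<forall>y\<in>S. f y = g y" "smooth_at g x"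
  shows "smooth_at f x"
proof -
  obtain e where e: "e > 0" "\<forall>k. Ck_on k g (ball x e)" using assms(4) unfolding smooth_at_def by blast
  obtain r where r: "r > 0" "ball x r \<subseteq> S" using assms(1,2) open_contains_ball by blast
  define e' where "e' = min e r"
  have "e' > 0" using e r e'_def by simp
  moreover have "Ck_on k f (ball x e')" for k
  proof -
    have "ball x e' \<subseteq> ball x e" by (simp add: e'_def subset_ball)
    hence "Ck_on k g (ball x e')" using e(2) Ck_on_subset by blast
    moreover have "\<forall>y\<in>ball x e'. g y = f y" using assms(3) r e'_def by auto
    ultimately show ?thesis using Ck_on_cong_open by blast
  qed
  ultimately show ?thesis unfolding smooth_at_def by blast
qed

lemma hderiv_poly: "(deriv ^^ j) (poly p) = poly ((pderiv ^^ j) p)"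
proof (induction j)
  case (Suc j)
  show ?case by (simp add: Suc ext DERIV_imp_deriv)
qed simp

lemma Ck_poly: "Ck_on k (poly p) S"
  unfolding Ck_on_def hderiv_poly
  by (auto intro!: continuous_intros simp: real_differentiable_def intro: poly_DERIV)

lemma Ck_poly': "Ck_on k (\<lambda>x. poly p x) S"
  using Ck_poly by (metis eta_contract_eq)

lemma smooth_poly: "smooth_at (poly p) x"
  unfolding smooth_at_def using Ck_poly by (meson zero_less_one)

lemma hderiv_add:
  assumes "Ck_on k f UNIV" "Ck_on k g UNIV" "j \<le> k"
  shows "(deriv ^^ j) (\<lambda>x. f x + g x) = (\<lambda>x. (deriv ^^ j) f x + (deriv ^^ j) g x)"
  using assms(3)
proof (induction j)
  case (Suc j)
  have "j < k" using Suc by simp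
  hence d: "(deriv ^^ j) f field_differentiable at x" "(deriv ^^ j) g field_differentiable at x" for x
    using assms(1,2) unfolding Ck_on_def by (auto intro: rdiff_fdiff)
  show ?case using Suc by (auto simp: d)
qed simp

lemma hderiv_cmult:
  assumes "Ck_on k f UNIV" "j \<le> k"
  shows "(deriv ^^ j) (\<lambda>x. c * f x) = (\<lambda>x. c * (deriv ^^ j) f x)"
  using assms(2)
proof (induction j)
  case (Suc j)
  have "j < k" using Suc by simp
  hence d: "(deriv ^^ j) f field_differentiable at x" for x
    using assms(1) unfolding Ck_on_def by (auto intro: rdiff_fdiff)
  show ?case using Suc by (auto simp: d deriv_cmult)
qed simp

lemma Ck_add:
  assumes "Ck_on k f UNIV" "Ck_on k g UNIV"
  shows "Ck_on k (\<lambda>x. f x + g x) UNIV"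
  unfolding Ck_on_def
proof (intro conjI allI impI ballI)
  fix j x assume "j < k"
  thus "(deriv ^^ j) (\<lambda>x. f x + g x) differentiable at x"
    using assms hderiv_add[OF assms, of j] unfolding Ck_on_def by auto
next
  show "continuous_on UNIV ((deriv ^^ k) (\<lambda>x. f x + g x))"
    using assms hderiv_add[OF assms, of k] unfolding Ck_on_def
    by (auto intro: continuous_on_add)
qed

lemma Ck_cmult:
  assumes "Ck_on k f UNIV"
  shows "Ck_on k (\<lambda>x. c * f x) UNIV"
  unfolding Ck_on_def
proof (intro conjI allI impI ballI)
  fix j x assume "j < k"
  thus "(deriv ^^ j) (\<lambda>x. c * f x) differentiable at x"
    using assms hderiv_cmult[OF assms, of j] unfolding Ck_on_def by auto
next
  show "continuous_on UNIV ((deriv ^^ k) (\<lambda>x. c * f x))"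
    using assms hderiv_cmult[OF assms, of k] unfolding Ck_on_def
    by (auto intro: continuous_on_mult continuous_on_const)
qed

lemma Ck_sum:
  assumes "finite A" "\<And>i. i \<in> A \<Longrightarrow> Ck_on k (f i) UNIV"
  shows "Ck_on k (\<lambda>x. \<Sum>i\<in>A. f i x) UNIV"
  using assms
proof (induction A rule: finite_induct)
  case empty
  then show ?case using Ck_poly'[of k 0 UNIV] by simp
next
  case (insert a A)
  then show ?case using Ck_add[of k "f a" "\<lambda>x. \<Sum>i\<in>A. f i x"] by simp
qed


definition T :: "real \<Rightarrow> nat \<Rightarrow> real \<Rightarrow> real" where
  "T c e y = (max 0 (y - c)) ^ e"

lemma T_cont: "continuous_on S (T c e)"
  unfolding T_def by (auto intro!: continuous_intros)

lemma T_deriv: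
  assumes "e \<ge> 2"
  shows "(T c e has_real_derivative (real e * T c (e - 1) y)) (at y)"
proof (cases "y = c")
  case True
  have "((\<lambda>z. (T c e z - T c e c) / (z - c)) \<longlongrightarrow> 0) (at c)"
  proof (rule Lim_null_comparison)
    show "eventually (\<lambda>z. norm ((T c e z - T c e c) / (z - c)) \<le> \<bar>z - c\<bar> ^ (e - 1)) (at c)"
    proof (rule always_eventually, intro allI)
      fix z
      show "norm ((T c e z - T c e c) / (z - c)) \<le> \<bar>z - c\<bar> ^ (e - 1)"
      proof (cases "z \<le> c")
        case True
        then show ?thesis using assms by (simp add: T_def)
      next
        case False
        have "T c e z = (z - c) ^ e" using False by (simp add: T_def)
        moreover have "(z - c) ^ e / (z - c) = (z - c) ^ (e - 1)"
        proof -
          have "e = Suc (e - 1)" using assms by simp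
          hence "(z - c) ^ e = (z - c) * (z - c) ^ (e - 1)" by (metis power_Suc)
          thus ?thesis using False by simp
        qed
        moreover have "(0::real) ^ e = 0" using assms by simp
        ultimately show ?thesis using False assms by (simp add: T_def power_0_left)
      qed
    qed
    have "((\<lambda>z. \<bar>z - c\<bar> ^ (e - 1)) \<longlongrightarrow> \<bar>c - c\<bar> ^ (e - 1)) (at c)"
      by (intro tendsto_intros)
    moreover have "\<bar>c - c\<bar> ^ (e - 1) = (0::real)" using assms by (simp add: power_0_left)
    ultimately show "((\<lambda>z. \<bar>z - c\<bar> ^ (e - 1)) \<longlongrightarrow> 0) (at c)" by metis
  qed
  moreover have "T c (e - 1) c = 0" using assms by (simp add: T_def)
  ultimately show ?thesis using True by (simp add: has_field_derivative_iff)
next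
  case False
  show ?thesis
  proof (cases "y > c")
    case True
    have ev: "eventually (\<lambda>z. T c e z = (z - c) ^ e) (nhds y)"
      using True unfolding eventually_nhds by (intro exI[of _ "{c<..}"]) (auto simp: T_def)
    have "((\<lambda>z. (z - c) ^ e) has_real_derivative (real e * (y - c) ^ (e - 1))) (at y)"
      by (auto intro!: derivative_eq_intros)
    moreover have "T c (e - 1) y = (y - c) ^ (e - 1)" using True by (simp add: T_def)
    ultimately show ?thesis using DERIV_cong_ev[OF refl ev refl] by simp
  next
    case False
    hence lt: "y < c" using \<open>y \<noteq> c\<close> by simp
    have ev: "eventually (\<lambda>z. T c e z = 0) (nhds y)"
      using lt assms unfolding eventually_nhds by (intro exI[of _ "{..<c}"]) (auto simp: T_def power_0_left)
    moreover have "T c (e - 1) y = 0" using lt assms by (simp add: T_def)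
    ultimately show ?thesis using DERIV_cong_ev[OF refl ev refl, of 0] by simp
  qed
qed

definition kap :: "nat \<Rightarrow> nat \<Rightarrow> real" where
  "kap m j = (\<Prod>i<j. real (m - i))"

lemma hderiv_T:
  assumes "j \<le> m - 1"
  shows "(deriv ^^ j) (T c m) = (\<lambda>y. kap m j * T c (m - j) y)"
  using assms
proof (induction j)
  case 0
  then show ?case by (simp add: kap_def)
next
  case (Suc j)
  have e2: "m - j \<ge> 2" using Suc by simp
  have "deriv (\<lambda>y. kap m j * T c (m - j) y) y = kap m (Suc j) * T c (m - Suc j) y" for y
  proof -
    have "((\<lambda>y. kap m j * T c (m - j) y) has_real_derivative
           kap m j * (real (m - j) * T c (m - j - 1) y)) (at y)"
      using T_deriv[OF e2] by (intro DERIV_cmult) auto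
    moreover have "kap m j * (real (m - j) * T c (m - j - 1) y) = kap m (Suc j) * T c (m - Suc j) y"
      by (simp add: kap_def)
    ultimately show ?thesis using DERIV_imp_deriv by metis
  qed
  thus ?case using Suc by auto
qed

lemma Ck_T:
  assumes "m \<ge> 1"
  shows "Ck_on (m - 1) (T c m) UNIV"
  unfolding Ck_on_def
proof (intro conjI allI impI ballI)
  fix j x assume j: "j < m - 1"
  have "(T c (m - j) has_real_derivative (real (m-j) * T c (m - j - 1) x)) (at x)"
    using j by (intro T_deriv) auto
  hence "(\<lambda>y. kap m j * T c (m - j) y) differentiable at x"
    using real_differentiable_def DERIV_cmult by blast
  thus "(deriv ^^ j) (T c m) differentiable at x" using hderiv_T[of j m c] j by simp
next
  show "continuous_on UNIV ((deriv ^^ (m - 1)) (T c m))"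
    using hderiv_T[of "m - 1" m c] by (auto intro!: continuous_intros T_cont)
qed


lemma pcompose_monom': "pcompose (monom c i) q = smult c (q ^ i)"
  by (induction i) (auto simp: monom_Suc pcompose_pCons monom_0)

lemma coeff_shift_compose:
  fixes E :: "real poly"
  assumes "degree E = Suc d"
  shows "coeff (E \<circ>\<^sub>p [:-h, 1:]) d = coeff E d - real (Suc d) * h * coeff E (Suc d)"
proof -
  let ?L = "[:-h, 1:] :: real poly"
  have "E \<circ>\<^sub>p ?L = (\<Sum>i\<le>Suc d. smult (coeff E i) (?L ^ i))"
  proof -
    have "E \<circ>\<^sub>p ?L = (\<Sum>i\<le>degree E. monom (coeff E i) i) \<circ>\<^sub>p ?L"
      by (simp only: poly_as_sum_of_monoms)
    also have "\<dots> = (\<Sum>i\<le>degree E. smult (coeff E i) (?L ^ i))"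
      by (simp only: pcompose_sum pcompose_monom')
    finally show ?thesis using assms by simp
  qed
  hence "coeff (E \<circ>\<^sub>p ?L) d = (\<Sum>i\<le>Suc d. coeff E i * coeff (?L ^ i) d)"
    by (simp add: coeff_sum)
  also have "\<dots> = (\<Sum>i<d. coeff E i * coeff (?L ^ i) d) + coeff E d * coeff (?L ^ d) d
       + coeff E (Suc d) * coeff (?L ^ Suc d) d"
    by (simp add: lessThan_Suc_atMost[symmetric])
  also have "(\<Sum>i<d. coeff E i * coeff (?L ^ i) d) = 0"
  proof (intro sum.neutral ballI)
    fix i assume "i \<in> {..<d}"
    hence "degree (?L ^ i) < d" using degree_linear_power[of "-h" i] by simp
    hence "coeff (?L ^ i) d = 0" by (rule coeff_eq_0)
    thus "coeff E i * coeff (?L ^ i) d = 0" by simp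
  qed
  also have "coeff (?L ^ d) d = 1" by (simp add: coeff_linear_power)
  also have "coeff (?L ^ Suc d) d = real (Suc d) * (- h)"
    using coeff_linear_poly_power[of d "Suc d" "-h" 1] by simp
  finally show ?thesis by simp
qed

lemma diff_degree:
  fixes E :: "real poly"
  assumes "degree E = Suc d" "h \<noteq> 0"
  shows "degree (E - E \<circ>\<^sub>p [:-h, 1:]) = d" "E - E \<circ>\<^sub>p [:-h, 1:] \<noteq> 0"
proof -
  let ?L = "[:-h, 1:] :: real poly"
  let ?G = "E - E \<circ>\<^sub>p ?L"
  have dEL: "degree (E \<circ>\<^sub>p ?L) = Suc d" using assms by (simp add: degree_pcompose)
  have lEL: "coeff (E \<circ>\<^sub>p ?L) (Suc d) = coeff E (Suc d)"
    using lead_coeff_comp[of ?L E] assms dEL by simp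
  have "degree ?G \<le> d"
  proof (rule degree_le, intro allI impI)
    fix i assume "i > d"
    show "coeff ?G i = 0"
    proof (cases "i = Suc d")
      case True
      then show ?thesis using lEL by simp
    next
      case False
      hence "i > Suc d" using \<open>i > d\<close> by simp
      then show ?thesis using assms dEL by (simp add: coeff_eq_0)
    qed
  qed
  moreover have cG: "coeff ?G d \<noteq> 0"
  proof -
    have "E \<noteq> 0" using assms by auto
    hence "coeff E (Suc d) \<noteq> 0" using assms by (metis leading_coeff_0_iff)
    thus ?thesis using coeff_shift_compose[OF assms(1), of h] assms by simp
  qed
  ultimately show "degree ?G = d" using le_degree[OF cG] by simp
  show "?G \<noteq> 0" using cG by auto
qed

lemma span_shift:
  fixes E :: "real poly"
  assumes "degree E = d" "E \<noteq> 0" "h \<noteq> 0" "degree q \<le> d"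
  shows "\<exists>c. \<forall>t. poly q t = (\<Sum>k\<le>d. c k * poly E (t - b - real k * h))"
  using assms
proof (induction d arbitrary: E q b)
  case 0
  have E: "E = [:coeff E 0:]" using degree_0_id[OF "0.prems"(1)] by simp
  have q: "q = [:coeff q 0:]" using "0.prems"(4) by (metis degree_0_id le_zero_eq)
  have "coeff E 0 \<noteq> 0" using E "0.prems"(2) by (metis pCons_0_0)
  hence "\<forall>t. poly q t = (\<Sum>k\<le>0. (coeff q 0 / coeff E 0) * poly E (t - b - real k * h))"
    by (subst q, subst E) simp
  thus ?case by (rule exI[where x="\<lambda>_. coeff q 0 / coeff E 0"])
next
  case (Suc d)
  let ?L = "[:-h, 1:] :: real poly"
  define F where "F = E - E \<circ>\<^sub>p ?L"
  have dF: "degree F = d" "F \<noteq> 0" using diff_degree[OF Suc.prems(1,3)] F_def by auto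
  have pF: "poly F u = poly E u - poly E (u - h)" for u by (simp add: F_def poly_pcompose)
  define lam where "lam = coeff q (Suc d) / coeff E (Suc d)"
  have lE: "coeff E (Suc d) \<noteq> 0" using Suc.prems(1,2) by (metis leading_coeff_0_iff)
  define r where "r = q - smult lam (E \<circ>\<^sub>p [:-b, 1:])"
  have dEb: "degree (E \<circ>\<^sub>p [:-b, 1:]) = Suc d" using Suc.prems(1) by (simp add: degree_pcompose)
  have lEb: "coeff (E \<circ>\<^sub>p [:-b, 1:]) (Suc d) = coeff E (Suc d)"
    using lead_coeff_comp[of "[:-b, 1:]" E] Suc.prems(1) dEb by simp
  have dr: "degree r \<le> d"
  proof (rule degree_le, intro allI impI)
    fix i assume "i > d"
    show "coeff r i = 0"
    proof (cases "i = Suc d")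
      case True
      then show ?thesis using lEb lE by (simp add: r_def lam_def)
    next
      case False
      hence "i > Suc d" using \<open>i > d\<close> by simp
      then show ?thesis using Suc.prems(4) dEb by (simp add: coeff_eq_0 r_def)
    qed
  qed
  obtain e where e: "\<forall>t. poly r t = (\<Sum>k\<le>d. e k * poly F (t - b - real k * h))"
    using Suc.IH[OF dF Suc.prems(3) dr] by blast
  define c where "c k = (if k = 0 then lam else 0) + (if k \<le> d then e k else 0)
      - (if k \<ge> 1 then e (k - 1) else 0)" for k
  have "poly q t = (\<Sum>k\<le>Suc d. c k * poly E (t - b - real k * h))" for t
  proof -
    define g where "g k = poly E (t - b - real k * h)" for k
    have "poly q t = poly r t + lam * g 0"
      by (simp add: r_def g_def poly_pcompose)
    also have "poly r t = (\<Sum>k\<le>d. e k * g k) - (\<Sum>k\<le>d. e k * g (Suc k))"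
      using e by (simp add: pF g_def algebra_simps sum_subtractf)
    finally have q1: "poly q t = lam * g 0 + (\<Sum>k\<le>d. e k * g k) - (\<Sum>k\<le>d. e k * g (Suc k))"
      by simp
    have "(\<Sum>k\<le>Suc d. c k * g k) = (\<Sum>k\<le>Suc d. (if k = 0 then lam else 0) * g k)
        + (\<Sum>k\<le>Suc d. (if k \<le> d then e k else 0) * g k)
        - (\<Sum>k\<le>Suc d. (if k \<ge> 1 then e (k - 1) else 0) * g k)"
      by (simp add: c_def algebra_simps sum.distrib sum_subtractf)
    also have "(\<Sum>k\<le>Suc d. (if k = 0 then lam else 0) * g k) = lam * g 0"
      by (subst sum.atMost_Suc_shift) simp
    also have "(\<Sum>k\<le>Suc d. (if k \<le> d then e k else 0) * g k) = (\<Sum>k\<le>d. e k * g k)"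
      by (simp add: atMost_Suc)
    also have "(\<Sum>k\<le>Suc d. (if k \<ge> 1 then e (k - 1) else 0) * g k) = (\<Sum>k\<le>d. e k * g (Suc k))"
      by (subst sum.atMost_Suc_shift) simp
    finally show ?thesis using q1 by (simp add: g_def)
  qed
  thus ?case by blast
qed


definition PP :: "nat \<Rightarrow> real set \<Rightarrow> (real \<Rightarrow> real) \<Rightarrow> bool" where
  "PP m U f \<longleftrightarrow> (\<exists>p::real poly. degree p \<le> m \<and> (\<forall>x\<in>U. f x = poly p x))"

lemma PP_poly: "degree p \<le> m \<Longrightarrow> PP m U (\<lambda>x. poly p x)"
  unfolding PP_def by blast

lemma PP_add: "PP m U f \<Longrightarrow> PP m U g \<Longrightarrow> PP m U (\<lambda>x. f x + g x)"
  unfolding PP_def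
proof (elim exE conjE)
  fix p q :: "real poly"
  assume "degree p \<le> m" "\<forall>x\<in>U. f x = poly p x" "degree q \<le> m" "\<forall>x\<in>U. g x = poly q x"
  thus "\<exists>r::real poly. degree r \<le> m \<and> (\<forall>x\<in>U. f x + g x = poly r x)"
    by (intro exI[of _ "p + q"]) (auto intro: order.trans[OF degree_add_le_max])
qed

lemma PP_cmult: "PP m U f \<Longrightarrow> PP m U (\<lambda>x. c * f x)"
  unfolding PP_def
proof (elim exE conjE)
  fix p :: "real poly"
  assume "degree p \<le> m" "\<forall>x\<in>U. f x = poly p x"
  thus "\<exists>r::real poly. degree r \<le> m \<and> (\<forall>x\<in>U. c * f x = poly r x)"
    by (intro exI[of _ "smult c p"]) (auto intro: order.trans[OF degree_smult_le])
qed

lemma PP_sum: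
  assumes "finite A" "\<And>i. i \<in> A \<Longrightarrow> PP m U (f i)"
  shows "PP m U (\<lambda>x. \<Sum>i\<in>A. f i x)"
  using assms
proof (induction A rule: finite_induct)
  case empty
  then show ?case using PP_poly[of 0 m U] by simp
next
  case (insert a A)
  then show ?case using PP_add[of m U "f a" "\<lambda>x. \<Sum>i\<in>A. f i x"] by simp
qed

lemma PP_cong: "PP m U f \<Longrightarrow> \<forall>x\<in>U. g x = f x \<Longrightarrow> PP m U g"
  unfolding PP_def by auto

lemma interval_side:
  assumes "is_interval (U::real set)" "c \<notin> U" "y \<in> U" "y < c" "z \<in> U"
  shows "z < c"
proof (rule ccontr)
  assume "\<not> z < c"
  hence "y \<le> c" "c \<le> z" using assms by auto
  hence "c \<in> U" using assms(1,3,5) unfolding is_interval_1 by blast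
  thus False using assms(2) by simp
qed

lemma interval_side':
  assumes "is_interval (U::real set)" "c \<notin> U" "y \<in> U" "y > c" "z \<in> U"
  shows "z > c"
proof (rule ccontr)
  assume "\<not> z > c"
  hence "z \<le> c" "c \<le> y" using assms by auto
  hence "c \<in> U" using assms(1,3,5) unfolding is_interval_1 by blast
  thus False using assms(2) by simp
qed

lemma T_le: "m \<ge> 1 \<Longrightarrow> y \<le> c \<Longrightarrow> T c m y = 0"
  by (simp add: T_def power_0_left)

lemma T_ge: "y \<ge> c \<Longrightarrow> T c m y = (y - c) ^ m"
  by (simp add: T_def)

lemma PP_T:
  assumes "is_interval U" "c \<notin> U" "m \<ge> 1"
  shows "PP m U (T c m)"
proof (cases "\<exists>y\<in>U. y < c")
  case True
  hence "\<forall>z\<in>U. T c m z = poly 0 z" using interval_side[OF assms(1,2)] T_le[OF assms(3)]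
    by (metis less_imp_le poly_0)
  thus ?thesis unfolding PP_def by (metis degree_0 le0)
next
  case False
  hence "\<forall>z\<in>U. z \<ge> c" by auto
  hence "\<forall>z\<in>U. T c m z = poly ([:-c, 1:] ^ m) z" by (simp add: T_ge poly_power)
  moreover have "degree ([:-c, 1:] ^ m) \<le> m" by (simp add: degree_linear_power)
  ultimately show ?thesis unfolding PP_def by blast
qed

definition Lf :: "real \<Rightarrow> nat \<Rightarrow> real \<Rightarrow> real" where
  "Lf c m y = poly ([:-c, 1:] ^ m) y + (-1) * T c m y"

lemma Lf_ge: "m \<ge> 1 \<Longrightarrow> y \<ge> c \<Longrightarrow> Lf c m y = 0"
  by (simp add: Lf_def T_ge poly_power)

lemma Lf_le: "m \<ge> 1 \<Longrightarrow> y \<le> c \<Longrightarrow> Lf c m y = (y - c) ^ m"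
  by (simp add: Lf_def T_le poly_power)

lemma PP_Lf:
  assumes "is_interval U" "c \<notin> U" "m \<ge> 1"
  shows "PP m U (Lf c m)"
proof -
  have "PP m U (\<lambda>y. poly ([:-c, 1:] ^ m) y + (-1) * T c m y)"
    by (intro PP_add PP_cmult PP_poly PP_T assms) (simp add: degree_linear_power)
  thus ?thesis unfolding Lf_def[abs_def] by simp
qed

lemma Ck_Lf:
  assumes "m \<ge> 1"
  shows "Ck_on (m - 1) (Lf c m) UNIV"
proof -
  have "Ck_on (m - 1) (\<lambda>y. poly ([:-c, 1:] ^ m) y + (-1) * T c m y) UNIV"
    by (intro Ck_add Ck_cmult Ck_poly' Ck_T assms)
  thus ?thesis unfolding Lf_def[abs_def] by simp
qed

lemma sum_only0:
  fixes m :: nat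
  assumes "\<And>k. k \<in> {1..m} \<Longrightarrow> f k = (0::real)"
  shows "(\<Sum>k\<le>m. f k) = f 0"
proof -
  have "(\<Sum>k\<le>m. f k) = f 0 + (\<Sum>k\<in>{..m} - {0}. f k)" by (rule sum.remove) auto
  also have "(\<Sum>k\<in>{..m} - {0}. f k) = 0" using assms by (intro sum.neutral) auto
  finally show ?thesis by simp
qed

lemma mono_alpha:
  assumes "\<forall>i<n. (\<alpha>::nat\<Rightarrow>real) i < \<alpha> (Suc i)" "i \<le> j" "j \<le> n"
  shows "\<alpha> i \<le> \<alpha> j"
  using assms(2,3)
proof (induction j)
  case 0 thus ?case by simp
next
  case (Suc j)
  show ?case
  proof (cases "i = Suc j")
    case True thus ?thesis by simp
  next
    case False
    hence "\<alpha> i \<le> \<alpha> j" using Suc by simp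
    also have "\<alpha> j < \<alpha> (Suc j)" using assms(1) Suc by simp
    finally show ?thesis by simp
  qed
qed


theorem mainTheorem5:
  fixes m n :: nat and s :: "real \<Rightarrow> real" and \<alpha> :: "nat \<Rightarrow> real"
  assumes "m \<ge> 1"
    and "spline m s"
    and "\<forall>i<n. \<alpha> i < \<alpha> (Suc i)"
    and "knots s = \<alpha> ` {0..n}"
  shows "\<exists>sb. spline m sb \<and> compactly_supported sb \<and>
           (\<forall>x\<in>{\<alpha> 0..\<alpha> n}. sb x = s x) \<and>
           knots sb \<subseteq> {\<alpha> 0 - real k | k. k \<in> {1..m}} \<union> \<alpha> ` {0..n}
                       \<union> {\<alpha> n + real k | k. k \<in> {1..m}}"
proof -
  note m1 = assms(1)
  define a where "a = \<alpha> 0"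
  define b where "b = \<alpha> n"
  have ab: "a \<le> b" using mono_alpha[OF assms(3), of 0 n] a_def b_def by simp
  have aK: "a \<in> \<alpha> ` {0..n}" "b \<in> \<alpha> ` {0..n}" using a_def b_def by auto
  have Cs: "Ck_on (m - 1) s UNIV" using assms(2) unfolding spline_def by blast
  obtain P where P: "finite P" "\<And>U. is_interval U \<Longrightarrow> U \<inter> P = {} \<Longrightarrow>
        \<exists>p :: real poly. degree p \<le> m \<and> (\<forall>x\<in>U. s x = poly p x)"
    using assms(2) unfolding spline_def by blast
  obtain da where da: "da > 0" "\<forall>x\<in>P. x \<noteq> a \<longrightarrow> da \<le> dist a x"
    using finite_set_avoid[OF P(1)] by blast
  obtain db where db: "db > 0" "\<forall>x\<in>P. x \<noteq> b \<longrightarrow> db \<le> dist b x"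
    using finite_set_avoid[OF P(1)] by blast
  define \<delta> where "\<delta> = min (min da db) 1"
  have \<delta>: "\<delta> > 0" "\<delta> \<le> da" "\<delta> \<le> db" "\<delta> \<le> 1" using da db \<delta>_def by auto
  obtain pR where pR: "degree pR \<le> m" "\<forall>x\<in>{b<..<b+\<delta>}. s x = poly pR x"
  proof -
    have "{b<..<b+\<delta>} \<inter> P = {}"
    proof (rule ccontr)
      assume "{b<..<b+\<delta>} \<inter> P \<noteq> {}"
      then obtain x where "x \<in> P" "b < x" "x < b + \<delta>" by auto
      thus False using db \<delta> by (auto simp: dist_real_def)
    qed
    moreover have "is_interval {b<..<b+\<delta>}" unfolding is_interval_1 by auto
    ultimately show ?thesis using P(2) that by blast
  qed
  obtain pL where pL: "degree pL \<le> m" "\<forall>x\<in>{a-\<delta><..<a}. s x = poly pL x"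
  proof -
    have "{a-\<delta><..<a} \<inter> P = {}"
    proof (rule ccontr)
      assume "{a-\<delta><..<a} \<inter> P \<noteq> {}"
      then obtain x where "x \<in> P" "a - \<delta> < x" "x < a" by auto
      thus False using da \<delta> by (auto simp: dist_real_def)
    qed
    moreover have "is_interval {a-\<delta><..<a}" unfolding is_interval_1 by auto
    ultimately show ?thesis using P(2) that by blast
  qed
  define E :: "real poly" where "E = monom 1 m"
  have dE: "degree E = m" "E \<noteq> 0" by (auto simp: E_def degree_monom_eq)
  have pE: "poly E t = t ^ m" for t by (simp add: E_def poly_monom)
  obtain cc where cc: "\<forall>t. poly (-pR) t = (\<Sum>k\<le>m. cc k * poly E (t - b - real k * 1))"
    using span_shift[OF dE, of 1 "-pR" b] pR(1) by auto
  obtain dd where dd: "\<forall>t. poly (-pL) t = (\<Sum>k\<le>m. dd k * poly E (t - a - real k * (-1)))"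
    using span_shift[OF dE, of "-1" "-pL" a] pL(1) by auto
  define gL where "gL y = poly pL y + (\<Sum>k\<le>m. dd k * Lf (a - real k) m y)" for y
  define gR where "gR y = poly pR y + (\<Sum>k\<le>m. cc k * T (b + real k) m y)" for y
  define sb where "sb y = (if y < a then gL y else if y > b then gR y else s y)" for y
  define \<Phi> where "\<Phi> y = s y + cc 0 * T b m y + dd 0 * Lf a m y" for y

  have F1: "sb y = \<Phi> y" if y: "a - \<delta> < y" "y < b + \<delta>" for y
  proof (cases "y < a")
    case True
    have "(\<Sum>k\<le>m. dd k * Lf (a - real k) m y) = dd 0 * Lf (a - real 0) m y"
    proof (rule sum_only0)
      fix k assume "k \<in> {1..m}"
      hence "y \<ge> a - real k" using y \<delta> by auto
      thus "dd k * Lf (a - real k) m y = 0" using Lf_ge[OF m1] by simp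
    qed
    moreover have "s y = poly pL y" using pL(2) True y by auto
    moreover have "T b m y = 0" using T_le[OF m1] True ab by simp
    ultimately show ?thesis using True by (simp add: sb_def gL_def \<Phi>_def)
  next
    case False
    show ?thesis
    proof (cases "y > b")
      case True
      have "(\<Sum>k\<le>m. cc k * T (b + real k) m y) = cc 0 * T (b + real 0) m y"
      proof (rule sum_only0)
        fix k assume "k \<in> {1..m}"
        hence "y \<le> b + real k" using y \<delta> by auto
        thus "cc k * T (b + real k) m y = 0" using T_le[OF m1] by simp
      qed
      moreover have "s y = poly pR y" using pR(2) True y by auto
      moreover have "Lf a m y = 0" using Lf_ge[OF m1] True ab by simp
      ultimately show ?thesis using True False by (simp add: sb_def gR_def \<Phi>_def)
    next
      case False2: False
      thus ?thesis using False T_le[OF m1, of y b] Lf_ge[OF m1, of a y]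
        by (simp add: sb_def \<Phi>_def)
    qed
  qed

  have CgL: "Ck_on (m - 1) gL UNIV"
    unfolding gL_def[abs_def]
    by (intro Ck_add Ck_poly' Ck_sum Ck_cmult Ck_Lf m1) auto
  have CgR: "Ck_on (m - 1) gR UNIV"
    unfolding gR_def[abs_def]
    by (intro Ck_add Ck_poly' Ck_sum Ck_cmult Ck_T m1) auto
  have CPhi: "Ck_on (m - 1) \<Phi> UNIV"
    unfolding \<Phi>_def[abs_def]
    by (intro Ck_add Ck_cmult Ck_T Ck_Lf m1 Cs)
  have Csb: "Ck_on (m - 1) sb UNIV"
  proof (rule Ck_local)
    fix x
    show "\<exists>S g. open S \<and> x \<in> S \<and> Ck_on (m - 1) g UNIV \<and> (\<forall>y\<in>S. sb y = g y)"
    proof (cases "x < a")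
      case True
      thus ?thesis using CgL by (intro exI[of _ "{..<a}"] exI[of _ gL]) (auto simp: sb_def)
    next
      case False
      show ?thesis
      proof (cases "x > b")
        case True
        thus ?thesis using CgR ab by (intro exI[of _ "{b<..}"] exI[of _ gR]) (auto simp: sb_def)
      next
        case False2: False
        thus ?thesis using CPhi F1 False \<delta>
          by (intro exI[of _ "{a-\<delta><..<b+\<delta>}"] exI[of _ \<Phi>]) auto
      qed
    qed
  qed

  have PPgL: "PP m U gL" if "is_interval U" "\<forall>k\<le>m. a - real k \<notin> U" for U
    unfolding gL_def[abs_def]
    using that by (intro PP_add PP_poly PP_sum PP_cmult PP_Lf pL(1) m1) auto
  have PPgR: "PP m U gR" if "is_interval U" "\<forall>k\<le>m. b + real k \<notin> U" for U
    unfolding gR_def[abs_def]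
    using that by (intro PP_add PP_poly PP_sum PP_cmult PP_T pR(1) m1) auto

  define P' where "P' = P \<union> {a, b} \<union> (\<lambda>k. a - real k) ` {..m} \<union> (\<lambda>k. b + real k) ` {..m}"
  have fP': "finite P'" using P(1) by (simp add: P'_def)
  have spl: "spline m sb"
    unfolding spline_def
  proof (intro conjI exI[of _ P'] allI impI)
    show "Ck_on (m - 1) sb UNIV" by (rule Csb)
    show "finite P'" by (rule fP')
    fix U :: "real set" assume U: "is_interval U \<and> U \<inter> P' = {}"
    hence Ui: "is_interval U" and aU: "a \<notin> U" and bU: "b \<notin> U" and PU: "U \<inter> P = {}"
      and akU: "\<forall>k\<le>m. a - real k \<notin> U" and bkU: "\<forall>k\<le>m. b + real k \<notin> U"
      unfolding P'_def by auto
    have "PP m U sb"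
    proof (cases "\<exists>y\<in>U. y < a")
      case True
      hence "\<forall>z\<in>U. z < a" using interval_side[OF Ui aU] by blast
      hence "\<forall>z\<in>U. sb z = gL z" by (simp add: sb_def)
      thus ?thesis using PPgL[OF Ui akU] PP_cong by blast
    next
      case False
      show ?thesis
      proof (cases "\<exists>y\<in>U. y > b")
        case True
        hence "\<forall>z\<in>U. z > b" using interval_side'[OF Ui bU] by blast
        hence "\<forall>z\<in>U. sb z = gR z" using ab by (auto simp: sb_def)
        thus ?thesis using PPgR[OF Ui bkU] PP_cong by blast
      next
        case False2: False
        hence "\<forall>z\<in>U. sb z = s z" using False by (auto simp: sb_def)
        moreover have "PP m U s" using P(2)[OF Ui PU] unfolding PP_def by blast
        ultimately show ?thesis using PP_cong by blast
      qed
    qed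
    thus "\<exists>p :: real poly. degree p \<le> m \<and> (\<forall>x\<in>U. sb x = poly p x)" unfolding PP_def .
  qed

  have zero: "sb y = 0" if "y < a - real m \<or> y > b + real m" for y
  proof (cases "y < a - real m")
    case True
    hence ya: "y < a" using m1 by simp
    have "(\<Sum>k\<le>m. dd k * Lf (a - real k) m y) = (\<Sum>k\<le>m. dd k * poly E (y - a - real k * (-1)))"
    proof (intro sum.cong refl)
      fix k assume "k \<in> {..m}"
      hence "y \<le> a - real k" using True by auto
      thus "dd k * Lf (a - real k) m y = dd k * poly E (y - a - real k * (-1))"
        using Lf_le[OF m1] by (simp add: pE algebra_simps)
    qed
    moreover have "(\<Sum>k\<le>m. dd k * poly E (y - a - real k * (-1))) = - poly pL y"
      using dd[rule_format, of y] by simp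
    ultimately show ?thesis using ya by (simp add: sb_def gL_def)
  next
    case False
    hence yb: "y > b + real m" using that by simp
    hence yb': "y > b" by simp
    have "\<not> y < a" using yb ab by simp
    moreover have "(\<Sum>k\<le>m. cc k * T (b + real k) m y) = (\<Sum>k\<le>m. cc k * poly E (y - b - real k * 1))"
    proof (intro sum.cong refl)
      fix k assume "k \<in> {..m}"
      hence "y \<ge> b + real k" using yb by auto
      thus "cc k * T (b + real k) m y = cc k * poly E (y - b - real k * 1)"
        using T_ge by (simp add: pE algebra_simps)
    qed
    moreover have "(\<Sum>k\<le>m. cc k * poly E (y - b - real k * 1)) = - poly pR y"
      using cc[rule_format, of y] by simp
    ultimately show ?thesis using yb' by (simp add: sb_def gR_def)
  qed
  have cs: "compactly_supported sb"
  proof -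
    have sub: "{x. sb x \<noteq> 0} \<subseteq> {a - real m..b + real m}" using zero by force
    hence "closure {x. sb x \<noteq> 0} \<subseteq> {a - real m..b + real m}"
      by (intro closure_minimal) auto
    hence "bounded (closure {x. sb x \<noteq> 0})" using bounded_subset bounded_closed_interval by blast
    thus ?thesis unfolding compactly_supported_def
      using compact_eq_bounded_closed by blast
  qed

  define K where "K = {\<alpha> 0 - real k | k. k \<in> {1..m}} \<union> \<alpha> ` {0..n} \<union> {\<alpha> n + real k | k. k \<in> {1..m}}"
  have kn: "smooth_at sb x" if xK: "x \<notin> K" for x
  proof -
    have xs: "x \<notin> knots s" "x \<noteq> a" "x \<noteq> b" using xK aK assms(4) unfolding K_def by auto
    have sms: "smooth_at s x" using xs(1) unfolding knots_def by simp
    show ?thesis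
    proof (cases "x < a")
      case True
      define Q where "Q = (\<lambda>k. a - real k) ` {..m}"
      have xQ: "x \<notin> Q" using xK xs unfolding Q_def K_def a_def
        by (auto simp: atLeastAtMost_iff) (metis Suc_le_eq le0 le_neq_implies_less not_less_eq_eq)
      obtain r where r: "r > 0" "\<forall>q\<in>Q. q \<noteq> x \<longrightarrow> r \<le> dist x q"
        using finite_set_avoid[of Q x] unfolding Q_def by blast
      define r' where "r' = min r (a - x)"
      have r': "r' > 0" using r True r'_def by simp
      have Ui: "is_interval (ball x r')" using convex_ball is_interval_convex_1 by blast
      have sub: "ball x r' \<subseteq> {..<a}" using r'_def by (auto simp: dist_real_def)
      have "\<forall>k\<le>m. a - real k \<notin> ball x r'"
      proof (intro allI impI)
        fix k assume "k \<le> m"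
        hence "a - real k \<in> Q" unfolding Q_def by auto
        hence "r \<le> dist x (a - real k)" using r xQ by auto
        thus "a - real k \<notin> ball x r'" using r'_def by auto
      qed
      then obtain p where p: "\<forall>y\<in>ball x r'. gL y = poly p y"
        using PPgL[OF Ui] unfolding PP_def by blast
      have "\<forall>y\<in>ball x r'. sb y = poly p y" using p sub by (auto simp: sb_def)
      thus ?thesis using smooth_cong[of "ball x r'" x sb "poly p"] r' smooth_poly by auto
    next
      case False
      show ?thesis
      proof (cases "x > b")
        case True
        define Q where "Q = (\<lambda>k. b + real k) ` {..m}"
        have xQ: "x \<notin> Q" using xK xs unfolding Q_def K_def b_def
          by (auto simp: atLeastAtMost_iff) (metis Suc_le_eq le0 le_neq_implies_less not_less_eq_eq)
        obtain r where r: "r > 0" "\<forall>q\<in>Q. q \<noteq> x \<longrightarrow> r \<le> dist x q"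
          using finite_set_avoid[of Q x] unfolding Q_def by blast
        define r' where "r' = min r (x - b)"
        have r': "r' > 0" using r True r'_def by simp
        have Ui: "is_interval (ball x r')" using convex_ball is_interval_convex_1 by blast
        have sub: "ball x r' \<subseteq> {b<..}" using r'_def by (auto simp: dist_real_def)
        have "\<forall>k\<le>m. b + real k \<notin> ball x r'"
        proof (intro allI impI)
          fix k assume "k \<le> m"
          hence "b + real k \<in> Q" unfolding Q_def by auto
          hence "r \<le> dist x (b + real k)" using r xQ by auto
          thus "b + real k \<notin> ball x r'" using r'_def by auto
        qed
        then obtain p where p: "\<forall>y\<in>ball x r'. gR y = poly p y"
          using PPgR[OF Ui] unfolding PP_def by blast
        have "\<forall>y\<in>ball x r'. sb y = poly p y" using p sub ab by (auto simp: sb_def)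
        thus ?thesis using smooth_cong[of "ball x r'" x sb "poly p"] r' smooth_poly by auto
      next
        case False2: False
        hence "a < x" "x < b" using False xs by auto
        moreover have "\<forall>y\<in>{a<..<b}. sb y = s y" by (auto simp: sb_def)
        ultimately show ?thesis using smooth_cong[of "{a<..<b}" x sb s] sms by auto
      qed
    qed
  qed
  have "knots sb \<subseteq> K" using kn unfolding knots_def by blast
  moreover have "\<forall>x\<in>{\<alpha> 0..\<alpha> n}. sb x = s x" by (auto simp: sb_def a_def b_def)
  ultimately show ?thesis using spl cs unfolding K_def by blast
qed

end
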